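(* Let $p,q$ be positive integers and let $m,s$ be positive integers. Then $G_{2^m s}$ has the same parity as $G_s$, and if $G_s$ is even then $\frac12 G_{2^m s}\equiv 1\pmod 2$.
   Context: $A=pq+2$, $B=\sqrt{A^2-4}$, $G_n=\left(\frac{A+B}{2}\right)^n+\left(\frac{A-B}{2}\right)^n$ (an integer). *)

theory Defs
  imports Complex_Main
begin

definition A_val :: "int \<Rightarrow> int \<Rightarrow> real" where
  "A_val p q = real_of_int (p * q + 2)"

definition B_val :: "int \<Rightarrow> int \<Rightarrow> real" where
  "B_val p q = sqrt ((A_val p q)^2 - 4)"

definition G :: "int \<Rightarrow> int \<Rightarrow> nat \<Rightarrow> real" where
  "G p q n = ((A_val p q + B_val p q) / 2) ^ n + ((A_val p q - B_val p q) / 2) ^ n"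

end

theory Submission
  imports Defs
begin

lemma ab_facts:
  fixes p q :: int
  assumes "p > 0" "q > 0"
  defines "a \<equiv> (A_val p q + B_val p q) / 2" and "b \<equiv> (A_val p q - B_val p q) / 2"
  shows "a * b = 1" "a + b = A_val p q"
proof -
  have "p * q \<ge> 1" using assms by (smt (verit) mult_pos_pos)
  hence "real_of_int (p*q) \<ge> 1" by linarith
  hence A3: "A_val p q \<ge> 3" unfolding A_val_def by linarith
  hence "(A_val p q)^2 \<ge> 3^2" by (intro power_mono) auto
  hence "(A_val p q)^2 - 4 \<ge> 0" by simp
  hence sq: "(B_val p q)^2 = (A_val p q)^2 - 4" unfolding B_val_def by simp
  have "a * b = ((A_val p q)^2 - (B_val p q)^2) / 4"
    unfolding a_def b_def by (simp add: field_simps power2_eq_square)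
  thus "a * b = 1" using sq by simp
  show "a + b = A_val p q" unfolding a_def b_def by (simp add: field_simps)
qed

lemma G_rec:
  fixes p q :: int
  assumes "p > 0" "q > 0"
  shows "G p q (n + 2) = A_val p q * G p q (n + 1) - G p q n"
proof -
  define a where "a = (A_val p q + B_val p q) / 2"
  define b where "b = (A_val p q - B_val p q) / 2"
  have ab: "a * b = 1" "a + b = A_val p q" unfolding a_def b_def using ab_facts[OF assms] by simp_all
  have "a^(n+2) + b^(n+2) = (a+b) * (a^(n+1) + b^(n+1)) - (a*b) * (a^n + b^n)"
    by (simp add: algebra_simps power2_eq_square)
  thus ?thesis using ab unfolding G_def a_def[symmetric] b_def[symmetric] by simp
qed


lemma G_int2:
  fixes p q :: int
  assumes "p > 0" "q > 0"
  shows "(\<exists>k::int. G p q n = of_int k) \<and> (\<exists>k::int. G p q (n+1) = of_int k)"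
proof (induction n)
  case 0
  have "G p q 0 = of_int 2" unfolding G_def by simp
  moreover have "G p q 1 = of_int (p*q+2)"
    unfolding G_def A_val_def by (simp add: field_simps)
  ultimately show ?case by (metis add_0)
next
  case (Suc n)
  then obtain k1 k2 where k: "G p q n = of_int k1" "G p q (n+1) = of_int k2" by blast
  have a: "G p q (Suc n + 1) = of_int ((p*q+2) * k2 - k1)"
    using G_rec[OF assms, of n] k unfolding A_val_def by simp
  have b: "G p q (Suc n) = of_int k2" using k by simp
  show ?case using a b by blast
qed

lemma G_double:
  fixes p q :: int
  assumes "p > 0" "q > 0"
  shows "G p q (2 * n) = (G p q n)^2 - 2"
proof -
  define a where "a = (A_val p q + B_val p q) / 2"
  define b where "b = (A_val p q - B_val p q) / 2"
  have ab: "a * b = 1" unfolding a_def b_def using ab_facts[OF assms] by simp_all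
  have e1: "a^(2*n) = a^n * a^n" "b^(2*n) = b^n * b^n"
    by (simp_all add: mult_2 power_add)
  have "(a^n + b^n)^2 - 2 = a^(2*n) + b^(2*n) + 2 * ((a*b)^n - 1)"
    unfolding e1 power_mult_distrib by (simp add: power2_eq_square algebra_simps)
  thus ?thesis using ab unfolding G_def a_def[symmetric] b_def[symmetric] by simp
qed

theorem lemma1:
  fixes p q :: int and m s :: nat
  assumes "p > 0" "q > 0" "m > 0" "s > 0"
  shows "(\<exists>k::int. G p q (2^m * s) - G p q s = 2 * of_int k)
         \<and> ((\<exists>k::int. G p q s = 2 * of_int k) \<longrightarrow>
              (\<exists>k::int. G p q (2^m * s) / 2 = 2 * of_int k + 1))"
proof -
  define g where "g n = floor (G p q n)" for n
  have gG: "G p q n = of_int (g n)" for n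
    using G_int2[OF assms(1,2), of n] unfolding g_def by auto
  have gd: "g (2*n) = (g n)^2 - 2" for n
  proof -
    have "real_of_int (g (2*n)) = real_of_int ((g n)^2 - 2)"
      using G_double[OF assms(1,2), of n] gG[of n] gG[of "2*n"] by simp
    thus ?thesis by (simp only: of_int_eq_iff)
  qed
  have par: "even (g (2^m * s) - g s)" for m
  proof (induction m)
    case 0 then show ?case by simp
  next
    case (Suc m)
    have "g (2^Suc m * s) = (g (2^m*s))^2 - 2" using gd[of "2^m*s"] by (simp add: mult.assoc)
    moreover have "even ((g (2^m*s))^2 - 2 - g (2^m*s))"
      by (simp add: power2_eq_square)
    ultimately show ?case using Suc.IH by (metis even_add diff_add_cancel)
  qed
  have md: "even (g s) \<Longrightarrow> g (2^Suc m * s) mod 4 = 2" for m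
  proof (induction m)
    case 0
    then obtain j where "g s = 2*j" by blast
    hence "g (2^Suc 0 * s) = 4*(j*j - 1) + 2" using gd[of s] by (simp add: power2_eq_square)
    then show ?case by (simp only:) presburger
  next
    case (Suc m)
    have h: "g (2^Suc m * s) mod 4 = 2" using Suc.IH Suc.prems by blast
    have "g (2^Suc m * s) = 4*(g (2^Suc m * s) div 4) + 2"
      using h div_mult_mod_eq[of "g (2^Suc m * s)" 4] by linarith
    then obtain j where j: "g (2^Suc m * s) = 4*j+2" by blast
    have "g (2^Suc (Suc m) * s) = (g (2^Suc m*s))^2 - 2"
      using gd[of "2^Suc m*s"] by (simp add: mult.assoc)
    also have "\<dots> = 4*(4*j*j + 4*j) + 2" using j by (simp add: power2_eq_square algebra_simps)
    finally show ?case by (simp only:) presburger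
  qed
  show ?thesis
  proof
    obtain k where "g (2^m * s) - g s = 2 * k" using par[of m] by blast
    thus "\<exists>k::int. G p q (2^m * s) - G p q s = 2 * of_int k"
      using gG[of "2^m*s"] gG[of s] by (intro exI[of _ k]) simp
  next
    show "(\<exists>k::int. G p q s = 2 * of_int k) \<longrightarrow>
              (\<exists>k::int. G p q (2^m * s) / 2 = 2 * of_int k + 1)"
    proof
      assume "\<exists>k::int. G p q s = 2 * of_int k"
      then obtain k where "G p q s = 2 * of_int k" by blast
      hence "real_of_int (g s) = real_of_int (2 * k)" using gG[of s] by simp
      hence "g s = 2 * k" by (simp only: of_int_eq_iff)
      hence "even (g s)" by simp
      moreover obtain m' where "m = Suc m'" using assms(3) gr0_implies_Suc by blast
      ultimately have "g (2^m * s) mod 4 = 2" using md by simp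
      hence "g (2^m * s) = 4*(g (2^m * s) div 4) + 2"
        using div_mult_mod_eq[of "g (2^m * s)" 4] by linarith
      then obtain j where j: "g (2^m * s) = 4*j + 2" by blast
      have "G p q (2^m * s) / 2 = 2 * of_int j + 1" using gG[of "2^m*s"] j by simp
      thus "\<exists>k::int. G p q (2^m * s) / 2 = 2 * of_int k + 1" by blast
    qed
  qed
qed

end
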